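(* Let $k,t\ge1$ be integers and let $D$ be a digraph with $\mathrm{dtw}(D)<k$. Then either $D$ contains $t$ pairwise vertex-disjoint even dicycles, or there exists a set $A\subseteq V(D)$ with $|A|\le k(t-1)$ such that $D-A$ contains no even dicycle.
   Context: A dicycle is even if it has an even number of edges. An arborescence is a rooted tree with all edges oriented away from the root; $T_t$ denotes the subarborescence rooted at $t$. $Y$ strongly guards $X$ (for $X,Y\subseteq V(D)$) if every directed walk starting and ending in $X$ and containing a vertex outside $X$ contains a vertex of $Y$. A directed tree decomposition of $D$ is $(T,\beta,\gamma)$ with $T$ an arborescence, $\beta\colon V(T)\to2^{V(D)}$ such that the nonempty bags $\beta(t)$ partition $V(D)$, and $\gamma\colon E(T)\to 2^{V(D)}$ such that for each $(d,t)\in E(T)$, $\gamma(d,t)$ strongly guards $\bigcup_{t'\in V(T_t)}\beta(t')$. With $\Gamma(t):=\beta(t)\cup\bigcup_{e\text{ incident with }t}\gamma(e)$, the width is $\max_t|\Gamma(t)|-1$, and the directed treewidth $\mathrm{dtw}(D)$ is the minimum width of a directed tree decomposition of $D$. *)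

theory Defs
  imports Main
begin

definition is_dicycle :: "'a set \<Rightarrow> ('a \<times> 'a) set \<Rightarrow> 'a list \<Rightarrow> bool" where
  "is_dicycle V E cs \<longleftrightarrow> cs \<noteq> [] \<and> distinct cs \<and> set cs \<subseteq> V \<and>
     (\<forall>i < length cs. (cs ! i, cs ! ((i + 1) mod length cs)) \<in> E)"

definition is_even_dicycle :: "'a set \<Rightarrow> ('a \<times> 'a) set \<Rightarrow> 'a list \<Rightarrow> bool" where
  "is_even_dicycle V E cs \<longleftrightarrow> is_dicycle V E cs \<and> even (length cs)"

definition del_verts_V :: "'a set \<Rightarrow> 'a set \<Rightarrow> 'a set" where
  "del_verts_V V A = V - A"

definition del_verts_E :: "('a \<times> 'a) set \<Rightarrow> 'a set \<Rightarrow> ('a \<times> 'a) set" where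
  "del_verts_E E A = {(u, v). (u, v) \<in> E \<and> u \<notin> A \<and> v \<notin> A}"

definition is_walk :: "'a set \<Rightarrow> ('a \<times> 'a) set \<Rightarrow> 'a list \<Rightarrow> bool" where
  "is_walk V E w \<longleftrightarrow> w \<noteq> [] \<and> set w \<subseteq> V \<and>
     (\<forall>i. Suc i < length w \<longrightarrow> (w ! i, w ! Suc i) \<in> E)"

definition strongly_guards :: "'a set \<Rightarrow> ('a \<times> 'a) set \<Rightarrow> 'a set \<Rightarrow> 'a set \<Rightarrow> bool" where
  "strongly_guards V E Y X \<longleftrightarrow>
     (\<forall>w. is_walk V E w \<and> hd w \<in> X \<and> last w \<in> X \<and> (\<exists>v \<in> set w. v \<notin> X)
          \<longrightarrow> (\<exists>v \<in> set w. v \<in> Y))"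

definition is_arborescence :: "'b set \<Rightarrow> ('b \<times> 'b) set \<Rightarrow> 'b \<Rightarrow> bool" where
  "is_arborescence N ET r \<longleftrightarrow> finite N \<and> r \<in> N \<and> ET \<subseteq> N \<times> N \<and>
     (\<forall>d. (d, r) \<notin> ET) \<and>
     (\<forall>t \<in> N. t \<noteq> r \<longrightarrow> (\<exists>!d. (d, t) \<in> ET)) \<and>
     (\<forall>t \<in> N. (r, t) \<in> ET\<^sup>*)"

definition subarb :: "('b \<times> 'b) set \<Rightarrow> 'b \<Rightarrow> 'b set" where
  "subarb ET t = {t'. (t, t') \<in> ET\<^sup>*}"

definition is_dtd ::
  "'a set \<Rightarrow> ('a \<times> 'a) set \<Rightarrow> 'b set \<Rightarrow> ('b \<times> 'b) set \<Rightarrow> 'b \<Rightarrow>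
   ('b \<Rightarrow> 'a set) \<Rightarrow> ('b \<times> 'b \<Rightarrow> 'a set) \<Rightarrow> bool" where
  "is_dtd V E N ET r \<beta> \<gamma> \<longleftrightarrow> is_arborescence N ET r \<and>
     (\<forall>t \<in> N. \<beta> t \<subseteq> V) \<and> (\<Union>t \<in> N. \<beta> t) = V \<and>
     (\<forall>t \<in> N. \<forall>t' \<in> N. t \<noteq> t' \<longrightarrow> \<beta> t \<inter> \<beta> t' = {}) \<and>
     (\<forall>e \<in> ET. \<gamma> e \<subseteq> V) \<and>
     (\<forall>(d, t) \<in> ET. strongly_guards V E (\<gamma> (d, t)) (\<Union>t' \<in> subarb ET t. \<beta> t'))"

definition Gamma :: "('b \<times> 'b) set \<Rightarrow> ('b \<Rightarrow> 'a set) \<Rightarrow> ('b \<times> 'b \<Rightarrow> 'a set) \<Rightarrow> 'b \<Rightarrow> 'a set" where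
  "Gamma ET \<beta> \<gamma> t = \<beta> t \<union> (\<Union>e \<in> {e \<in> ET. fst e = t \<or> snd e = t}. \<gamma> e)"

definition dtd_width :: "'b set \<Rightarrow> ('b \<times> 'b) set \<Rightarrow> ('b \<Rightarrow> 'a set) \<Rightarrow> ('b \<times> 'b \<Rightarrow> 'a set) \<Rightarrow> int" where
  "dtd_width N ET \<beta> \<gamma> = int (Max ((\<lambda>t. card (Gamma ET \<beta> \<gamma> t)) ` N)) - 1"

text \<open>Directed treewidth: minimum width over all directed tree decompositions
  (tree nodes taken from nat, which suffices since arborescences are finite).\<close>
definition dtw :: "'a set \<Rightarrow> ('a \<times> 'a) set \<Rightarrow> int" where
  "dtw V E = (LEAST w. \<exists>(N :: nat set) ET r \<beta> \<gamma>. is_dtd V E N ET r \<beta> \<gamma> \<and> dtd_width N ET \<beta> \<gamma> = w)"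

end

theory Submission
  imports Defs
begin

lemma dicycle_walk:
  assumes "is_dicycle V E cs" "i < length cs"
  shows "is_walk V E (rotate i cs @ [cs!i]) \<and> hd (rotate i cs @ [cs!i]) = cs!i
     \<and> last (rotate i cs @ [cs!i]) = cs!i \<and> set (rotate i cs @ [cs!i]) = set cs"
proof -
  let ?n = "length cs"
  let ?w = "rotate i cs @ [cs!i]"
  have n: "?n > 0" using assms by auto
  have cyc: "\<forall>j < ?n. (cs ! j, cs ! ((j + 1) mod ?n)) \<in> E" and sub: "set cs \<subseteq> V"
    using assms(1) unfolding is_dicycle_def by auto
  have setw: "set ?w = set cs" using assms(2) by (auto simp: set_rotate)
  have wj: "?w ! j = cs ! ((i + j) mod ?n)" if "j \<le> ?n" for j
  proof (cases "j < ?n")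
    case True then show ?thesis by (simp add: nth_append nth_rotate)
  next
    case False then have "j = ?n" using that by simp
    then show ?thesis using assms(2) by (simp add: nth_append)
  qed
  have hd: "hd ?w = cs!i"
  proof -
    have "rotate i cs \<noteq> []" using n by auto
    then have "hd ?w = ?w ! 0" by (simp add: hd_conv_nth)
    also have "\<dots> = cs!i" using wj[of 0] assms(2) by simp
    finally show ?thesis .
  qed
  have walk: "is_walk V E ?w"
    unfolding is_walk_def
  proof (intro conjI allI impI)
    show "?w \<noteq> []" by simp
    show "set ?w \<subseteq> V" using setw sub by simp
  next
    fix j assume "Suc j < length ?w"
    then have j: "Suc j \<le> ?n" by simp
    have "(cs ! ((i + j) mod ?n), cs ! (((i + j) mod ?n + 1) mod ?n)) \<in> E"
      using cyc n by simp
    moreover have "((i + j) mod ?n + 1) mod ?n = (i + Suc j) mod ?n"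
      by (simp add: mod_Suc_eq)
    ultimately show "(?w ! j, ?w ! Suc j) \<in> E" using wj[of j] wj[of "Suc j"] j by simp
  qed
  show ?thesis using walk hd setw by simp
qed

lemma arb_acyclic:
  assumes "is_arborescence N ET r"
  shows "(x,x) \<notin> ET\<^sup>+"
proof
  assume xx: "(x,x) \<in> ET\<^sup>+"
  have ETN: "ET \<subseteq> N \<times> N" and noin: "\<forall>d. (d, r) \<notin> ET"
    and uniq: "\<forall>t \<in> N. t \<noteq> r \<longrightarrow> (\<exists>!d. (d, t) \<in> ET)"
    and reach: "\<forall>t \<in> N. (r, t) \<in> ET\<^sup>*"
    using assms unfolding is_arborescence_def by auto
  from xx obtain z where "(z,x) \<in> ET" using tranclD2 by fastforce
  then have "x \<in> N" using ETN by auto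
  then obtain n where "(r,x) \<in> ET ^^ n" using reach rtrancl_power by blast
  moreover have "\<forall>x. (r,x) \<in> ET ^^ n \<longrightarrow> (x,x) \<notin> ET\<^sup>+"
  proof (induction n)
    case 0
    show ?case
    proof (intro allI impI)
      fix y assume "(r,y) \<in> ET ^^ 0"
      then have "y = r" by simp
      show "(y,y) \<notin> ET\<^sup>+"
      proof
        assume "(y,y) \<in> ET\<^sup>+"
        then obtain q where "(q,y) \<in> ET" using tranclD2 by fastforce
        then show False using noin \<open>y = r\<close> by auto
      qed
    qed
  next
    case (Suc n)
    show ?case
    proof (intro allI impI)
      fix y assume "(r,y) \<in> ET ^^ Suc n"
      then obtain p where p1: "(r,p) \<in> ET ^^ n" and p2: "(p,y) \<in> ET" by auto
      show "(y,y) \<notin> ET\<^sup>+"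
      proof
        assume "(y,y) \<in> ET\<^sup>+"
        then obtain q where q1: "(y,q) \<in> ET\<^sup>*" and q2: "(q,y) \<in> ET" using tranclD2 by metis
        have "y \<in> N" "y \<noteq> r" using p2 ETN noin by auto
        then have "q = p" using uniq q2 p2 by blast
        then have "(p,p) \<in> ET\<^sup>+" using p2 q1 rtrancl_into_trancl2 by metis
        then show False using Suc.IH p1 by blast
      qed
    qed
  qed
  ultimately show False using xx by blast
qed

lemma subarb_sub:
  assumes "ET \<subseteq> N \<times> N" "t \<in> N"
  shows "subarb ET t \<subseteq> N"
proof
  fix s assume "s \<in> subarb ET t"
  then have "(t,s) \<in> ET\<^sup>*" by (simp add: subarb_def)
  then show "s \<in> N"
    by (cases rule: rtranclE) (use assms in auto)
qed

lemma child_exists: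
  assumes "s \<in> subarb ET t" "s \<noteq> t"
  shows "\<exists>c. (t,c) \<in> ET \<and> s \<in> subarb ET c"
proof -
  have "(t,s) \<in> ET\<^sup>*" using assms by (simp add: subarb_def)
  then show ?thesis
    by (cases rule: converse_rtranclE) (use assms in \<open>auto simp: subarb_def\<close>)
qed

lemma guard_cycle:
  assumes dtd: "is_dtd V E N ET r \<beta> \<gamma>" and tc: "(t,c) \<in> ET"
    and cyc: "is_dicycle V E cs" and av: "set cs \<inter> \<gamma> (t,c) = {}"
    and u: "u \<in> set cs" "u \<in> (\<Union>t' \<in> subarb ET c. \<beta> t')"
  shows "set cs \<subseteq> (\<Union>t' \<in> subarb ET c. \<beta> t')"
proof (rule ccontr)
  let ?X = "(\<Union>t' \<in> subarb ET c. \<beta> t')"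
  assume "\<not> set cs \<subseteq> ?X"
  then obtain v where v: "v \<in> set cs" "v \<notin> ?X" by blast
  obtain i where i: "i < length cs" "cs ! i = u" using u(1) by (metis in_set_conv_nth)
  let ?w = "rotate i cs @ [cs!i]"
  have w: "is_walk V E ?w \<and> hd ?w = cs!i \<and> last ?w = cs!i \<and> set ?w = set cs"
    using dicycle_walk[OF cyc i(1)] .
  have sg: "strongly_guards V E (\<gamma> (t,c)) ?X" using dtd tc unfolding is_dtd_def by blast
  moreover have "is_walk V E ?w \<and> hd ?w \<in> ?X \<and> last ?w \<in> ?X \<and> (\<exists>y \<in> set ?w. y \<notin> ?X)"
    using w i u v by auto
  ultimately have "\<exists>x \<in> set ?w. x \<in> \<gamma> (t,c)"
    unfolding strongly_guards_def by blast
  then show False using w av by auto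
qed

lemma main:
  fixes V :: "'a set" and E and N :: "'b set" and ET r \<beta> \<gamma> and k :: nat
  assumes dtd: "is_dtd V E N ET r \<beta> \<gamma>" and fin: "finite V"
   and wid: "\<forall>t\<in>N. card (Gamma ET \<beta> \<gamma> t) \<le> k"
  shows "m \<ge> 1 \<Longrightarrow> W \<subseteq> V \<Longrightarrow>
    (\<exists>Cs. length Cs = m \<and> (\<forall>i<m. is_even_dicycle V E (Cs!i) \<and> set (Cs!i) \<subseteq> W) \<and>
        (\<forall>i<m. \<forall>j<m. i\<noteq>j \<longrightarrow> set (Cs!i) \<inter> set (Cs!j) = {}))
    \<or> (\<exists>A\<subseteq>W. card A \<le> k*(m-1) \<and> (\<forall>cs. is_even_dicycle V E cs \<and> set cs \<subseteq> W \<longrightarrow> set cs \<inter> A \<noteq> {}))"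
proof (induction m arbitrary: W)
  case 0 then show ?case by simp
next
  case (Suc m)
  have arb: "is_arborescence N ET r" using dtd by (simp add: is_dtd_def)
  have ETN: "ET \<subseteq> N \<times> N" and reach: "\<forall>t \<in> N. (r, t) \<in> ET\<^sup>*" and fN: "finite N"
    and rN: "r \<in> N"
    using arb unfolding is_arborescence_def by auto
  have bV: "\<forall>t \<in> N. \<beta> t \<subseteq> V" and bU: "(\<Union>t \<in> N. \<beta> t) = V" and gV: "\<forall>e \<in> ET. \<gamma> e \<subseteq> V"
    using dtd unfolding is_dtd_def by auto
  define S where "S s = (\<Union>t' \<in> subarb ET s. \<beta> t')" for s
  show ?case
  proof (cases "\<exists>cs. is_even_dicycle V E cs \<and> set cs \<subseteq> W")
    case False
    then show ?thesis by (intro disjI2 exI[of _ "{}"]) auto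
  next
    case True
    then obtain cs0 where cs0: "is_even_dicycle V E cs0" "set cs0 \<subseteq> W" by blast
    show ?thesis
    proof (cases "m = 0")
      case True
      then show ?thesis using cs0 by (intro disjI1 exI[of _ "[cs0]"]) auto
    next
      case False
      then have m1: "m \<ge> 1" by simp
      define P where "P s \<longleftrightarrow> s \<in> N \<and> (\<exists>cs. is_even_dicycle V E cs \<and> set cs \<subseteq> W \<and> set cs \<subseteq> S s)" for s
      have "N \<subseteq> subarb ET r" using reach by (auto simp: subarb_def)
      then have "V \<subseteq> S r" using bU by (auto simp: S_def)
      then have "P r" using cs0 rN Suc.prems unfolding P_def by blast
      then obtain t where Pt: "P t" and tmin: "\<forall>s. P s \<longrightarrow> card (subarb ET t) \<le> card (subarb ET s)"
        using ex_has_least_nat[of P r "\<lambda>s. card (subarb ET s)"] by blast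
      then obtain C0 where C0: "is_even_dicycle V E C0" "set C0 \<subseteq> W" "set C0 \<subseteq> S t" and tN: "t \<in> N"
        unfolding P_def by blast
      define G where "G = Gamma ET \<beta> \<gamma> t"
      have GV: "G \<subseteq> V" using bV gV tN unfolding G_def Gamma_def by auto
      have cardG: "card G \<le> k" using wid tN G_def by simp
      have key: "set cs \<inter> S t = {}" if cs: "is_even_dicycle V E cs" "set cs \<subseteq> W" "set cs \<inter> G = {}" for cs
      proof (rule ccontr)
        assume "set cs \<inter> S t \<noteq> {}"
        then obtain u s where u: "u \<in> set cs" "u \<in> \<beta> s" "s \<in> subarb ET t" unfolding S_def by blast
        have "\<beta> t \<subseteq> G" unfolding G_def Gamma_def by auto
        then have "s \<noteq> t" using u cs(3) by auto
        then obtain c where tc: "(t,c) \<in> ET" and sc: "s \<in> subarb ET c" using child_exists u(3) by metis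
        have "\<gamma> (t,c) \<subseteq> G" using tc unfolding G_def Gamma_def by auto
        then have av: "set cs \<inter> \<gamma> (t,c) = {}" using cs(3) by auto
        have cyc: "is_dicycle V E cs" using cs(1) by (simp add: is_even_dicycle_def)
        have "set cs \<subseteq> S c" unfolding S_def
          using guard_cycle[OF dtd tc cyc av u(1)] u sc by blast
        moreover have cN: "c \<in> N" using tc ETN by auto
        ultimately have "P c" using cs unfolding P_def by blast
        then have le: "card (subarb ET t) \<le> card (subarb ET c)" using tmin by blast
        have sub: "subarb ET c \<subseteq> subarb ET t" using tc
          by (auto simp: subarb_def intro: converse_rtrancl_into_rtrancl)
        have "t \<notin> subarb ET c"
        proof
          assume "t \<in> subarb ET c"
          then have "(c,t) \<in> ET\<^sup>*" by (simp add: subarb_def)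
          then have "(t,t) \<in> ET\<^sup>+" using tc rtrancl_into_trancl2 by metis
          then show False using arb_acyclic[OF arb] by blast
        qed
        moreover have "t \<in> subarb ET t" by (simp add: subarb_def)
        ultimately have "subarb ET c \<subset> subarb ET t" using sub by blast
        moreover have "finite (subarb ET t)" using subarb_sub[OF ETN tN] fN finite_subset by blast
        ultimately have "card (subarb ET c) < card (subarb ET t)" by (rule psubset_card_mono[rotated])
        then show False using le by simp
      qed
      define W' where "W' = W - S t - G"
      have "W' \<subseteq> V" using Suc.prems W'_def by auto
      from Suc.IH[OF m1 this] show ?thesis
      proof
        assume "\<exists>Cs. length Cs = m \<and> (\<forall>i<m. is_even_dicycle V E (Cs!i) \<and> set (Cs!i) \<subseteq> W') \<and>
          (\<forall>i<m. \<forall>j<m. i\<noteq>j \<longrightarrow> set (Cs!i) \<inter> set (Cs!j) = {})"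
        then obtain Cs where Cs: "length Cs = m" "\<forall>i<m. is_even_dicycle V E (Cs!i) \<and> set (Cs!i) \<subseteq> W'"
          "\<forall>i<m. \<forall>j<m. i\<noteq>j \<longrightarrow> set (Cs!i) \<inter> set (Cs!j) = {}" by blast
        have A: "\<forall>i<Suc m. is_even_dicycle V E ((C0#Cs)!i) \<and> set ((C0#Cs)!i) \<subseteq> W"
          using Cs C0 W'_def by (auto simp: nth_Cons split: nat.splits)
        have B: "\<forall>i<Suc m. \<forall>j<Suc m. i\<noteq>j \<longrightarrow> set ((C0#Cs)!i) \<inter> set ((C0#Cs)!j) = {}"
        proof (intro allI impI)
          fix i j assume ij: "i < Suc m" "j < Suc m" "i \<noteq> j"
          have d0: "set C0 \<inter> set (Cs!l) = {}" if "l < m" for l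
            using Cs(2) that C0(3) W'_def by blast
          show "set ((C0#Cs)!i) \<inter> set ((C0#Cs)!j) = {}"
          proof (cases i)
            case 0 then obtain j' where "j = Suc j'" using ij by (cases j) auto
            then show ?thesis using 0 d0 ij by auto
          next
            case (Suc i')
            show ?thesis
            proof (cases j)
              case 0 then show ?thesis using Suc d0 ij by auto
            next
              case (Suc j') then show ?thesis using \<open>i = Suc i'\<close> Cs(3) ij by auto
            qed
          qed
        qed
        show ?thesis using A B Cs(1) by (intro disjI1 exI[of _ "C0#Cs"]) simp
      next
        assume "\<exists>A\<subseteq>W'. card A \<le> k*(m-1) \<and> (\<forall>cs. is_even_dicycle V E cs \<and> set cs \<subseteq> W' \<longrightarrow> set cs \<inter> A \<noteq> {})"
        then obtain A' where A': "A' \<subseteq> W'" "card A' \<le> k*(m-1)"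
          "\<forall>cs. is_even_dicycle V E cs \<and> set cs \<subseteq> W' \<longrightarrow> set cs \<inter> A' \<noteq> {}" by blast
        define A where "A = A' \<union> (G \<inter> W)"
        have "finite G" using GV fin finite_subset by blast
        then have "card (G \<inter> W) \<le> k" using cardG by (meson card_mono inf_le1 le_trans)
        then have "card A \<le> k*(m-1) + k" unfolding A_def using A'(2) card_Un_le[of A' "G \<inter> W"] by linarith
        also have "\<dots> = k * (Suc m - 1)" using m1 by (cases m) (auto simp: algebra_simps)
        finally have cA: "card A \<le> k * (Suc m - 1)" .
        have AW: "A \<subseteq> W" using A'(1) W'_def A_def by auto
        have hit: "\<forall>cs. is_even_dicycle V E cs \<and> set cs \<subseteq> W \<longrightarrow> set cs \<inter> A \<noteq> {}"
        proof (intro allI impI)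
          fix cs assume cs: "is_even_dicycle V E cs \<and> set cs \<subseteq> W"
          show "set cs \<inter> A \<noteq> {}"
          proof (cases "set cs \<inter> G = {}")
            case False then show ?thesis using cs A_def by auto
          next
            case True
            then have "set cs \<inter> S t = {}" using key cs by blast
            then have "set cs \<subseteq> W'" using cs True W'_def by auto
            then show ?thesis using A'(3) cs A_def by auto
          qed
        qed
        show ?thesis using AW cA hit by blast
      qed
    qed
  qed
qed

theorem lemma3p1:
  fixes V :: "'a set" and E :: "('a \<times> 'a) set" and k t :: nat
  assumes "finite V" and "E \<subseteq> V \<times> V"
    and "k \<ge> 1" and "t \<ge> 1"
    and "dtw V E < int k"
  shows "(\<exists>Cs :: 'a list list. length Cs = t \<and>
            (\<forall>i < t. is_even_dicycle V E (Cs ! i)) \<and>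
            (\<forall>i < t. \<forall>j < t. i \<noteq> j \<longrightarrow> set (Cs ! i) \<inter> set (Cs ! j) = {}))
       \<or> (\<exists>A \<subseteq> V. card A \<le> k * (t - 1) \<and>
            \<not> (\<exists>cs. is_even_dicycle (del_verts_V V A) (del_verts_E E A) cs))"
proof -
  define Q where "Q = (\<lambda>(x :: nat set \<times> (nat \<times> nat) set \<times> nat \<times> (nat \<Rightarrow> 'a set) \<times> (nat \<times> nat \<Rightarrow> 'a set)).
     case x of (N, ET, r, \<beta>, \<gamma>) \<Rightarrow> is_dtd V E N ET r \<beta> \<gamma>)"
  define \<mu> where "\<mu> = (\<lambda>(x :: nat set \<times> (nat \<times> nat) set \<times> nat \<times> (nat \<Rightarrow> 'a set) \<times> (nat \<times> nat \<Rightarrow> 'a set)).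
     case x of (N, ET, r, \<beta>, \<gamma>) \<Rightarrow> Max ((\<lambda>t. card (Gamma ET \<beta> \<gamma> t)) ` N))"
  have "Q ({0}, {}, 0, \<lambda>_. V, \<lambda>_. {})"
    unfolding Q_def is_dtd_def is_arborescence_def strongly_guards_def subarb_def by auto
  then obtain x where Qx: "Q x" and xmin: "\<forall>y. Q y \<longrightarrow> \<mu> x \<le> \<mu> y"
    using ex_has_least_nat[of Q _ \<mu>] by blast
  obtain N ET r \<beta> \<gamma> where x: "x = (N, ET, r, \<beta>, \<gamma>)" by (cases x) auto
  have dtd: "is_dtd V E N ET r \<beta> \<gamma>" using Qx x Q_def by simp
  have "dtw V E = dtd_width N ET \<beta> \<gamma>"
    unfolding dtw_def
  proof (rule Least_equality)
    show "\<exists>(N' :: nat set) ET' r' \<beta>' \<gamma>'. is_dtd V E N' ET' r' \<beta>' \<gamma>' \<and> dtd_width N' ET' \<beta>' \<gamma>' = dtd_width N ET \<beta> \<gamma>"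
      using dtd by blast
  next
    fix y assume "\<exists>(N' :: nat set) ET' r' \<beta>' \<gamma>'. is_dtd V E N' ET' r' \<beta>' \<gamma>' \<and> dtd_width N' ET' \<beta>' \<gamma>' = y"
    then obtain N' :: "nat set" and ET' r' \<beta>' \<gamma>' where d: "is_dtd V E N' ET' r' \<beta>' \<gamma>'" "dtd_width N' ET' \<beta>' \<gamma>' = y"
      by blast
    have "Q (N', ET', r', \<beta>', \<gamma>')" using d Q_def by simp
    then have "\<mu> x \<le> \<mu> (N', ET', r', \<beta>', \<gamma>')" using xmin by blast
    then show "dtd_width N ET \<beta> \<gamma> \<le> y" using d(2) x unfolding \<mu>_def dtd_width_def by simp
  qed
  then have "int (Max ((\<lambda>t. card (Gamma ET \<beta> \<gamma> t)) ` N)) - 1 < int k"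
    using assms(5) by (simp add: dtd_width_def)
  then have mx: "Max ((\<lambda>t. card (Gamma ET \<beta> \<gamma> t)) ` N) \<le> k" by simp
  have fN: "finite N" using dtd by (simp add: is_dtd_def is_arborescence_def)
  have wid: "\<forall>t\<in>N. card (Gamma ET \<beta> \<gamma> t) \<le> k"
    using mx fN by (meson Max_ge finite_imageI image_eqI le_trans)
  have "t \<ge> 1" "V \<subseteq> V" using assms(4) by auto
  note mm = main[OF dtd assms(1) wid this]
  from mm show ?thesis
  proof
    assume "\<exists>Cs. length Cs = t \<and> (\<forall>i<t. is_even_dicycle V E (Cs!i) \<and> set (Cs!i) \<subseteq> V) \<and>
        (\<forall>i<t. \<forall>j<t. i\<noteq>j \<longrightarrow> set (Cs!i) \<inter> set (Cs!j) = {})"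
    then show ?thesis by blast
  next
    assume "\<exists>A\<subseteq>V. card A \<le> k*(t-1) \<and> (\<forall>cs. is_even_dicycle V E cs \<and> set cs \<subseteq> V \<longrightarrow> set cs \<inter> A \<noteq> {})"
    then obtain A where A: "A \<subseteq> V" "card A \<le> k*(t-1)"
      "\<forall>cs. is_even_dicycle V E cs \<and> set cs \<subseteq> V \<longrightarrow> set cs \<inter> A \<noteq> {}" by blast
    have "\<not> (\<exists>cs. is_even_dicycle (del_verts_V V A) (del_verts_E E A) cs)"
    proof
      assume "\<exists>cs. is_even_dicycle (del_verts_V V A) (del_verts_E E A) cs"
      then obtain cs where cs: "is_even_dicycle (del_verts_V V A) (del_verts_E E A) cs" by blast
      then have "is_even_dicycle V E cs" "set cs \<subseteq> V" "set cs \<inter> A = {}"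
        unfolding is_even_dicycle_def is_dicycle_def del_verts_V_def del_verts_E_def by auto
      then show False using A(3) by blast
    qed
    then show ?thesis using A by blast
  qed
qed

end
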